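(* Let $H \le K \le G$ be finite groups and let $U$ be an irreducible complex representation of $K$ with $U^H \ne 0$. Let $W = \mathrm{Ind}_K^G(U)$ (with $U$ identified with the summand $eU \subseteq W$), and let $V$ be an irreducible $G$-subrepresentation of $W$ (regarded also as a $K$-representation by restriction). Then: (1) $G_{(W^H)} \subseteq K_{(U^H)}$; (2) $V^H \ne 0$ and $K_{(V^H)} \subseteq K_{(U^H)}$; (3) if $K_{(U^H)} = H$, then $G_{(W^H)} = K_{(V^H)} = H$.
   Context: For a group $L$ acting linearly on a space $Y$, a subgroup $M \le L$ and a subspace $X \subseteq Y$: $Y^M = \{y \in Y : my = y \ \forall m \in M\}$ and $L_{(X)} = \{l \in L : lx = x \ \forall x \in X\}$. With $G/K = \{g_1K, \dots, g_sK\}$, $g_1 = e$, the induced representation $\mathrm{Ind}_K^G(U)$ is $\bigoplus_i g_iU$ with action $g\cdot \sum_i g_iu_i = \sum_i g_{\tau(i,g)}(k_{i,g}u_i)$ where $gg_i = g_{\tau(i,g)}k_{i,g}$, $k_{i,g} \in K$. *)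

theory Defs
  imports "HOL-Algebra.Algebra" "HOL-Library.Function_Algebras"
begin

definition is_rep ::
  "('g, 'b) monoid_scheme \<Rightarrow> (complex \<Rightarrow> 'v::ab_group_add \<Rightarrow> 'v) \<Rightarrow> 'v set \<Rightarrow> ('g \<Rightarrow> 'v \<Rightarrow> 'v) \<Rightarrow> bool"
  where "is_rep G sc Sp rho \<longleftrightarrow>
    group G \<and> vector_space sc \<and> Modules.module.subspace sc Sp \<and>
    (\<forall>g\<in>carrier G. \<forall>x\<in>Sp. rho g x \<in> Sp) \<and>
    (\<forall>g\<in>carrier G. \<forall>x\<in>Sp. \<forall>y\<in>Sp. rho g (x + y) = rho g x + rho g y) \<and>
    (\<forall>g\<in>carrier G. \<forall>c. \<forall>x\<in>Sp. rho g (sc c x) = sc c (rho g x)) \<and>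
    (\<forall>x\<in>Sp. rho (one G) x = x) \<and>
    (\<forall>g\<in>carrier G. \<forall>h\<in>carrier G. \<forall>x\<in>Sp. rho (monoid.mult G g h) x = rho g (rho h x))"

definition is_subrep ::
  "('g, 'b) monoid_scheme \<Rightarrow> (complex \<Rightarrow> 'v::ab_group_add \<Rightarrow> 'v) \<Rightarrow> 'v set \<Rightarrow> ('g \<Rightarrow> 'v \<Rightarrow> 'v) \<Rightarrow> 'v set \<Rightarrow> bool"
  where "is_subrep G sc Sp rho Y \<longleftrightarrow>
    Modules.module.subspace sc Y \<and> Y \<subseteq> Sp \<and> (\<forall>g\<in>carrier G. \<forall>y\<in>Y. rho g y \<in> Y)"

definition irreducible_rep ::
  "('g, 'b) monoid_scheme \<Rightarrow> (complex \<Rightarrow> 'v::ab_group_add \<Rightarrow> 'v) \<Rightarrow> 'v set \<Rightarrow> ('g \<Rightarrow> 'v \<Rightarrow> 'v) \<Rightarrow> bool"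
  where "irreducible_rep G sc Sp rho \<longleftrightarrow>
    is_rep G sc Sp rho \<and> Sp \<noteq> {0} \<and>
    (\<forall>Y. is_subrep G sc Sp rho Y \<longrightarrow> Y = {0} \<or> Y = Sp)"

definition fixed_vecs :: "'g set \<Rightarrow> ('g \<Rightarrow> 'v \<Rightarrow> 'v) \<Rightarrow> 'v set \<Rightarrow> 'v set"
  where "fixed_vecs M rho Y = {y \<in> Y. \<forall>m\<in>M. rho m y = y}"

definition pt_stab :: "'g set \<Rightarrow> ('g \<Rightarrow> 'v \<Rightarrow> 'v) \<Rightarrow> 'v set \<Rightarrow> 'g set"
  where "pt_stab L rho Sp = {l \<in> L. \<forall>x\<in>Sp. rho l x = x}"

definition left_transversal :: "('g, 'b) monoid_scheme \<Rightarrow> 'g set \<Rightarrow> 'g set \<Rightarrow> bool"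
  where "left_transversal G K R \<longleftrightarrow> R \<subseteq> carrier G \<and> (one G) \<in> R \<and>
    (\<forall>g\<in>carrier G. \<exists>!r. r \<in> R \<and> g \<in> l_coset G r K)"

text \<open>Induced representation Ind_K^G(U) = (direct sum over r in R of r U), modelled as
  functions w : 'g \<Rightarrow> 'u vanishing outside R (w r is the component in r U).\<close>
definition ind_space :: "'g set \<Rightarrow> ('g \<Rightarrow> 'u::zero) set"
  where "ind_space R = {w. \<forall>x. x \<notin> R \<longrightarrow> w x = 0}"

definition ind_scale :: "(complex \<Rightarrow> 'u \<Rightarrow> 'u) \<Rightarrow> complex \<Rightarrow> ('g \<Rightarrow> 'u) \<Rightarrow> ('g \<Rightarrow> 'u)"
  where "ind_scale sc c w = (\<lambda>x. sc c (w x))"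

text \<open>g \<cdot> (sum_i g_i u_i) = sum_i g_tau(i,g) (k_(i,g) u_i) with g g_i = g_tau(i,g) k_(i,g):
  the component at r' comes from the unique r in R with g r \<in> r' K, and k = r'^-1 g r.\<close>
definition ind_action ::
  "('g, 'b) monoid_scheme \<Rightarrow> 'g set \<Rightarrow> 'g set \<Rightarrow> ('g \<Rightarrow> 'u \<Rightarrow> 'u) \<Rightarrow> 'g \<Rightarrow> ('g \<Rightarrow> 'u::zero) \<Rightarrow> ('g \<Rightarrow> 'u)"
  where "ind_action G K R rho g w = (\<lambda>r'. if r' \<in> R then
      (let r = (THE r. r \<in> R \<and> monoid.mult G g r \<in> l_coset G r' K)
       in rho (monoid.mult G (monoid.mult G (m_inv G r') g) r) (w r))
    else 0)"

end

theory Submission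
  imports Defs
begin

locale indsetup = group G for G :: "('g, 'b) monoid_scheme" (structure) +
  fixes K R :: "'g set" and sc :: "complex \<Rightarrow> 'u::ab_group_add \<Rightarrow> 'u" and rho :: "'g \<Rightarrow> 'u \<Rightarrow> 'u"
  assumes K: "subgroup K G" and R: "left_transversal G K R"
    and U: "is_rep (G\<lparr>carrier := K\<rparr>) sc UNIV rho"
begin

lemma RG: "R \<subseteq> carrier G" and oneR: "\<one> \<in> R"
  and Runiq: "\<And>g. g \<in> carrier G \<Longrightarrow> \<exists>!r. r \<in> R \<and> g \<in> r <# K"
  using R unfolding left_transversal_def by auto

lemma cancel1 [simp]: "a \<in> carrier G \<Longrightarrow> x \<in> carrier G \<Longrightarrow> a \<otimes> (inv a \<otimes> x) = x"
  by (simp add: m_assoc[symmetric])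
lemma cancel2 [simp]: "a \<in> carrier G \<Longrightarrow> x \<in> carrier G \<Longrightarrow> inv a \<otimes> (a \<otimes> x) = x"
  by (simp add: m_assoc[symmetric])

lemma KG: "K \<subseteq> carrier G" using K subgroup.subset by blast

lemma coset_iff: "x \<in> carrier G \<Longrightarrow> r \<in> carrier G \<Longrightarrow> x \<in> r <# K \<longleftrightarrow> inv r \<otimes> x \<in> K"
proof
  assume "x \<in> carrier G" "r \<in> carrier G" "x \<in> r <# K"
  then obtain k where "k \<in> K" "x = r \<otimes> k" unfolding l_coset_def by auto
  then show "inv r \<otimes> x \<in> K" using \<open>r \<in> carrier G\<close> KG
    by (simp add: m_assoc[symmetric] subsetD)
next
  assume a: "x \<in> carrier G" "r \<in> carrier G" "inv r \<otimes> x \<in> K"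
  have "x = r \<otimes> (inv r \<otimes> x)" using a by (simp add: m_assoc[symmetric])
  then show "x \<in> r <# K" using a unfolding l_coset_def by blast
qed

lemma R_eq: assumes "r1 \<in> R" "r2 \<in> R" "inv r1 \<otimes> r2 \<in> K" shows "r1 = r2"
proof -
  have c: "r1 \<in> carrier G" "r2 \<in> carrier G" using assms RG by auto
  have "inv r2 \<otimes> r2 \<in> K" using c subgroup.one_closed[OF K] by simp
  then have "r2 \<in> r2 <# K" using coset_iff[OF c(2) c(2)] by blast
  moreover have "r2 \<in> r1 <# K" using coset_iff[OF c(2) c(1)] assms by blast
  ultimately show ?thesis using Runiq[OF c(2)] assms by blast
qed

lemma rho_one: "rho \<one> x = x" using U unfolding is_rep_def by simp
lemma rho_add: "k \<in> K \<Longrightarrow> rho k (x + y) = rho k x + rho k y" using U unfolding is_rep_def by simp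
lemma rho_sc: "k \<in> K \<Longrightarrow> rho k (sc c x) = sc c (rho k x)" using U unfolding is_rep_def by simp
lemma rho_mult: "k \<in> K \<Longrightarrow> l \<in> K \<Longrightarrow> rho (k \<otimes> l) x = rho k (rho l x)" using U unfolding is_rep_def by simp
lemma rho_zero: "k \<in> K \<Longrightarrow> rho k 0 = 0"
  using rho_add[of k 0 0] by simp
lemma rho_inj: assumes "k \<in> K" "rho k x = 0" shows "x = 0"
proof -
  have "inv k \<in> K" using assms(1) by (rule subgroup.m_inv_closed[OF K])
  have "x = rho (inv k \<otimes> k) x" using assms KG by (auto simp: rho_one)
  also have "\<dots> = rho (inv k) (rho k x)" using rho_mult \<open>inv k \<in> K\<close> assms by blast
  finally show ?thesis using assms rho_zero \<open>inv k \<in> K\<close> by simp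
qed

lemma exists_r: assumes "g \<in> carrier G" "r' \<in> R" shows "\<exists>r\<in>R. inv r' \<otimes> g \<otimes> r \<in> K"
proof -
  have c: "r' \<in> carrier G" using assms RG by auto
  have "inv g \<otimes> r' \<in> carrier G" using assms c by simp
  then obtain r where r: "r \<in> R" "inv g \<otimes> r' \<in> r <# K" using Runiq by blast
  have rc: "r \<in> carrier G" using r RG by auto
  have "inv r \<otimes> (inv g \<otimes> r') \<in> K" using r(2) coset_iff[OF \<open>inv g \<otimes> r' \<in> carrier G\<close> rc] by blast
  then have "inv (inv r \<otimes> (inv g \<otimes> r')) \<in> K" by (rule subgroup.m_inv_closed[OF K])
  also have "inv (inv r \<otimes> (inv g \<otimes> r')) = inv r' \<otimes> g \<otimes> r"
    using rc c assms by (simp add: inv_mult_group)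
  finally show ?thesis using r by blast
qed

lemma act_eval: assumes "g \<in> carrier G" "r' \<in> R" "r \<in> R" "inv r' \<otimes> g \<otimes> r \<in> K"
  shows "ind_action G K R rho g w r' = rho (inv r' \<otimes> g \<otimes> r) (w r)"
proof -
  have c: "r' \<in> carrier G" "r \<in> carrier G" using assms RG by auto
  have "(THE r. r \<in> R \<and> g \<otimes> r \<in> r' <# K) = r"
  proof (rule the_equality)
    have gc: "g \<otimes> r \<in> carrier G" using c assms by simp
    have "inv r' \<otimes> (g \<otimes> r) \<in> K" using assms c by (simp add: m_assoc)
    then show "r \<in> R \<and> g \<otimes> r \<in> r' <# K" using assms coset_iff[OF gc c(1)] by blast
  next
    fix r2 assume r2: "r2 \<in> R \<and> g \<otimes> r2 \<in> r' <# K"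
    have c2: "r2 \<in> carrier G" using r2 RG by auto
    have gc: "g \<otimes> r2 \<in> carrier G" using c2 assms by simp
    have a: "inv r' \<otimes> (g \<otimes> r2) \<in> K" using r2 coset_iff[OF gc c(1)] by blast
    have b: "inv (inv r' \<otimes> g \<otimes> r) \<in> K" using assms(4) by (rule subgroup.m_inv_closed[OF K])
    have "inv (inv r' \<otimes> g \<otimes> r) \<otimes> (inv r' \<otimes> (g \<otimes> r2)) \<in> K"
      using b a by (rule subgroup.m_closed[OF K])
    also have "inv (inv r' \<otimes> g \<otimes> r) \<otimes> (inv r' \<otimes> (g \<otimes> r2)) = inv r \<otimes> r2"
      using c c2 assms by (simp add: inv_mult_group m_assoc)
    finally show "r2 = r" using R_eq[of r r2] assms r2 by auto
  qed
  then show ?thesis using assms unfolding ind_action_def by simp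
qed

lemma r_unique: assumes "g \<in> carrier G" "r' \<in> R" "r \<in> R" "r2 \<in> R"
  "inv r' \<otimes> g \<otimes> r \<in> K" "inv r' \<otimes> g \<otimes> r2 \<in> K" shows "r2 = r"
proof -
  have c: "r' \<in> carrier G" "r \<in> carrier G" "r2 \<in> carrier G" using assms RG by auto
  have b: "inv (inv r' \<otimes> g \<otimes> r) \<in> K" using assms(5) by (rule subgroup.m_inv_closed[OF K])
  have "inv (inv r' \<otimes> g \<otimes> r) \<otimes> (inv r' \<otimes> g \<otimes> r2) \<in> K"
    using b assms(6) by (rule subgroup.m_closed[OF K])
  also have "inv (inv r' \<otimes> g \<otimes> r) \<otimes> (inv r' \<otimes> g \<otimes> r2) = inv r \<otimes> r2"
    using c assms by (simp add: inv_mult_group m_assoc)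
  finally show "r2 = r" using R_eq[of r r2] assms by auto
qed

definition emb :: "'u \<Rightarrow> 'g \<Rightarrow> 'u" where "emb u = (\<lambda>x. if x = \<one> then u else 0)"

lemma emb_space: "emb u \<in> ind_space R" using oneR unfolding emb_def ind_space_def by auto

lemma emb_eval: assumes "g \<in> carrier G" "r' \<in> R"
  shows "ind_action G K R rho g (emb u) r' = (if inv r' \<otimes> g \<in> K then rho (inv r' \<otimes> g) u else 0)"
proof -
  have c: "r' \<in> carrier G" using assms RG by auto
  obtain r where r: "r \<in> R" "inv r' \<otimes> g \<otimes> r \<in> K" using exists_r[OF assms] by blast
  have e: "ind_action G K R rho g (emb u) r' = rho (inv r' \<otimes> g \<otimes> r) (emb u r)"
    using act_eval[OF assms r] .
  show ?thesis
  proof (cases "r = \<one>")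
    case True
    then show ?thesis using e r c assms by (simp add: emb_def)
  next
    case False
    have "\<not> inv r' \<otimes> g \<in> K"
    proof
      assume "inv r' \<otimes> g \<in> K"
      then have "inv r' \<otimes> g \<otimes> \<one> \<in> K" using c assms by simp
      then have "\<one> = r" using r_unique[OF assms r(1) oneR r(2)] by simp
      then show False using False by simp
    qed
    then show ?thesis using e False r rho_zero by (simp add: emb_def)
  qed
qed

lemma act_e: assumes "k \<in> K" shows "ind_action G K R rho k w \<one> = rho k (w \<one>)"
proof -
  have c: "k \<in> carrier G" using assms KG by auto
  show ?thesis using act_eval[OF c oneR oneR] c assms by simp
qed

lemma act_inv_r: assumes "r \<in> R" shows "ind_action G K R rho (inv r) w \<one> = w r"
proof -
  have c: "r \<in> carrier G" using assms RG by auto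
  have "inv \<one> \<otimes> inv r \<otimes> r \<in> K" using c subgroup.one_closed[OF K] by simp
  then show ?thesis using act_eval[OF _ oneR assms, of "inv r"] c by (simp add: rho_one)
qed

end

lemma sum_fun_apply: "(sum f A) x = sum (\<lambda>a. f a x) A"
  by (induction A rule: infinite_finite_induct) auto


context indsetup begin
lemma main:
  fixes H :: "'g set" and V :: "('g \<Rightarrow> 'u) set"
  assumes "group G" and "finite (carrier G)"
    and "subgroup K G" and "subgroup H G" and "H \<subseteq> K"
    and U_irr: "irreducible_rep (G\<lparr>carrier := K\<rparr>) sc UNIV rho"
    and UH: "fixed_vecs H rho UNIV \<noteq> {0}"
    and R: "left_transversal G K R"
    and V_sub: "is_subrep G (ind_scale sc) (ind_space R) (ind_action G K R rho) V"
    and V_irr: "irreducible_rep G (ind_scale sc) V (ind_action G K R rho)"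
  shows "(pt_stab (carrier G) (ind_action G K R rho)
            (fixed_vecs H (ind_action G K R rho) (ind_space R))
           \<subseteq> pt_stab K rho (fixed_vecs H rho UNIV))
    \<and> (fixed_vecs H (ind_action G K R rho) V \<noteq> {0}
    \<and> pt_stab K (ind_action G K R rho) (fixed_vecs H (ind_action G K R rho) V)
           \<subseteq> pt_stab K rho (fixed_vecs H rho UNIV))
    \<and> (pt_stab K rho (fixed_vecs H rho UNIV) = H \<longrightarrow>
           pt_stab (carrier G) (ind_action G K R rho)
             (fixed_vecs H (ind_action G K R rho) (ind_space R)) = H
         \<and> pt_stab K (ind_action G K R rho) (fixed_vecs H (ind_action G K R rho) V) = H)"
proof -
  let ?a = "ind_action G K R rho"
  define UHs where "UHs = fixed_vecs H rho UNIV"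
  have HK: "H \<subseteq> K" by fact
  have HG: "H \<subseteq> carrier G" using HK KG by auto
  have finH: "finite H" using HG assms(2) finite_subset by blast
  have UH_iff: "u \<in> UHs \<longleftrightarrow> (\<forall>h\<in>H. rho h u = u)" for u
    unfolding UHs_def fixed_vecs_def by auto
  have vsU: "vector_space sc" using U_irr unfolding irreducible_rep_def is_rep_def by auto
  then have modU: "Modules.module sc" by (simp add: module_iff_vector_space)
  obtain u0 where u0: "u0 \<in> UHs" "u0 \<noteq> 0"
  proof -
    have "0 \<in> UHs" using UH_iff rho_zero HK by auto
    then show ?thesis using that UH unfolding UHs_def by blast
  qed
  have emb_fix: "emb u \<in> fixed_vecs H ?a (ind_space R)" if u: "u \<in> UHs" for u
  proof -
    have "?a h (emb u) = emb u" if h: "h \<in> H" for h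
    proof
      fix x
      have hc: "h \<in> carrier G" "h \<in> K" using h HG HK by auto
      show "?a h (emb u) x = emb u x"
      proof (cases "x \<in> R")
        case False
        then show ?thesis using oneR unfolding ind_action_def emb_def by auto
      next
        case True
        have xc: "x \<in> carrier G" using True RG by auto
        show ?thesis
        proof (cases "x = \<one>")
          case True
          then show ?thesis using emb_eval[OF hc(1) oneR] hc u h UH_iff by (simp add: emb_def)
        next
          case False
          have "\<not> inv x \<otimes> h \<in> K"
          proof
            assume a: "inv x \<otimes> h \<in> K"
            have "inv h \<in> K" using hc(2) by (rule subgroup.m_inv_closed[OF K])
            have "inv x \<otimes> h \<otimes> inv h \<in> K" using a \<open>inv h \<in> K\<close> by (rule subgroup.m_closed[OF K])
            then have "inv x \<otimes> \<one> \<in> K" using xc hc by (simp add: m_assoc)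
            then show False using R_eq[OF True oneR] False by simp
          qed
          then show ?thesis using emb_eval[OF hc(1) True] False by (simp add: emb_def)
        qed
      qed
    qed
    then show ?thesis using emb_space unfolding fixed_vecs_def by auto
  qed
  have P1: "pt_stab (carrier G) ?a (fixed_vecs H ?a (ind_space R)) \<subseteq> pt_stab K rho UHs"
  proof
    fix g assume "g \<in> pt_stab (carrier G) ?a (fixed_vecs H ?a (ind_space R))"
    then have g: "g \<in> carrier G" "\<And>w. w \<in> fixed_vecs H ?a (ind_space R) \<Longrightarrow> ?a g w = w"
      unfolding pt_stab_def by auto
    obtain r' where r': "r' \<in> R" "g \<in> r' <# K" using Runiq[OF g(1)] by blast
    have r'c: "r' \<in> carrier G" using r' RG by auto
    have k: "inv r' \<otimes> g \<in> K" using r'(2) coset_iff[OF g(1) r'c] by blast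
    have "?a g (emb u0) r' = emb u0 r'" using g(2)[OF emb_fix[OF u0(1)]] by simp
    then have eq: "rho (inv r' \<otimes> g) u0 = emb u0 r'" using emb_eval[OF g(1) r'(1)] k by simp
    have "r' = \<one>"
    proof (rule ccontr)
      assume "r' \<noteq> \<one>"
      then have "rho (inv r' \<otimes> g) u0 = 0" using eq by (simp add: emb_def)
      then show False using rho_inj[OF k] u0 by blast
    qed
    then have gK: "g \<in> K" using k g by simp
    have "rho g u = u" if "u \<in> UHs" for u
    proof -
      have "?a g (emb u) \<one> = emb u \<one>" using g(2)[OF emb_fix[OF that]] by simp
      then show ?thesis using emb_eval[OF g(1) oneR] gK g by (simp add: emb_def)
    qed
    then show "g \<in> pt_stab K rho UHs" using gK unfolding pt_stab_def by auto
  qed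
  have Vrep: "is_rep G (ind_scale sc) V ?a" and V0: "V \<noteq> {0}"
    using V_irr unfolding irreducible_rep_def by auto
  have VR: "V \<subseteq> ind_space R" using V_sub unfolding is_subrep_def by auto
  have modV: "Modules.module (ind_scale sc :: complex \<Rightarrow> ('g \<Rightarrow> 'u) \<Rightarrow> ('g \<Rightarrow> 'u))" using Vrep unfolding is_rep_def by (simp add: module_iff_vector_space)
  have Vsub: "module.subspace (ind_scale sc) V" using Vrep unfolding is_rep_def by auto
  have Vcl: "?a g v \<in> V" if "g \<in> carrier G" "v \<in> V" for g v
    using Vrep that unfolding is_rep_def by auto
  have Vadd: "?a g (v + w) = ?a g v + ?a g w" if "g \<in> carrier G" "v \<in> V" "w \<in> V" for g v w
    using Vrep that unfolding is_rep_def by auto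
  have Vmult: "?a (g \<otimes> h) v = ?a g (?a h v)" if "g \<in> carrier G" "h \<in> carrier G" "v \<in> V" for g h v
    using Vrep that unfolding is_rep_def by auto
  have V_0: "0 \<in> V" using Modules.module.subspace_0[OF modV Vsub] .
  have Vzero: "?a g 0 = 0" if "g \<in> carrier G" for g
    using Vadd[OF that V_0 V_0] by simp
  have Vsum: "?a g (sum f A) = sum (\<lambda>x. ?a g (f x)) A \<and> sum f A \<in> V"
    if "g \<in> carrier G" "finite A" "\<And>x. x \<in> A \<Longrightarrow> f x \<in> V" for g f and A :: "'x set"
    using that(2,3)
  proof (induction A rule: finite_induct)
    case empty then show ?case using Vzero[OF that(1)] V_0 by (simp only: sum.empty simp_thms)
  next
    case (insert x F)
    have IH: "?a g (sum f F) = sum (\<lambda>x. ?a g (f x)) F \<and> sum f F \<in> V" using insert by blast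
    have fx: "f x \<in> V" using insert by blast
    have e: "sum f (insert x F) = f x + sum f F" by (rule sum.insert[OF insert.hyps])
    have e2: "sum (\<lambda>y. ?a g (f y)) (insert x F) = ?a g (f x) + sum (\<lambda>y. ?a g (f y)) F"
      by (rule sum.insert[OF insert.hyps])
    show ?case unfolding e e2 using Vadd[OF that(1) fx] IH Modules.module.subspace_add[OF modV Vsub fx] by metis
  qed
  define Y where "Y = (\<lambda>v. v \<one>) ` V"
  have "is_subrep (G\<lparr>carrier := K\<rparr>) sc UNIV rho Y"
    unfolding is_subrep_def
  proof (intro conjI)
    show "module.subspace sc Y"
    proof (rule Modules.module.subspaceI[OF modU])
      show "0 \<in> Y" unfolding Y_def using V_0 by (force simp: zero_fun_def)
    next
      fix x y assume "x \<in> Y" "y \<in> Y"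
      then obtain v w where "v \<in> V" "w \<in> V" "x = v \<one>" "y = w \<one>" unfolding Y_def by auto
      then show "x + y \<in> Y" unfolding Y_def using Modules.module.subspace_add[OF modV Vsub, of v w]
        by (force simp: plus_fun_def)
    next
      fix c x assume "x \<in> Y"
      then obtain v where "v \<in> V" "x = v \<one>" unfolding Y_def by auto
      then show "sc c x \<in> Y" unfolding Y_def using Modules.module.subspace_scale[OF modV Vsub, of v c]
        by (force simp: ind_scale_def)
    qed
  next
    show "Y \<subseteq> UNIV" by simp
  next
    show "\<forall>g\<in>carrier (G\<lparr>carrier := K\<rparr>). \<forall>y\<in>Y. rho g y \<in> Y"
    proof (intro ballI)
      fix k y assume k: "k \<in> carrier (G\<lparr>carrier := K\<rparr>)" and y: "y \<in> Y"
      then obtain v where v: "v \<in> V" "y = v \<one>" unfolding Y_def by auto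
      have kK: "k \<in> K" using k by simp
      have "rho k y = ?a k v \<one>" using act_e[OF kK] v by simp
      moreover have "?a k v \<in> V" using Vcl kK KG v by auto
      ultimately show "rho k y \<in> Y" unfolding Y_def by auto
    qed
  qed
  moreover have "Y \<noteq> {0}"
  proof
    assume Y0: "Y = {0}"
    obtain v where v: "v \<in> V" "v \<noteq> 0" using V0 V_0 by blast
    then obtain r where r: "v r \<noteq> 0" by (auto simp: fun_eq_iff zero_fun_def)
    then have rR: "r \<in> R" using VR v unfolding ind_space_def by auto
    have "?a (inv r) v \<in> V" using Vcl rR RG v by auto
    then have "?a (inv r) v \<one> \<in> Y" unfolding Y_def by auto
    then show False using Y0 act_inv_r[OF rR] r by simp
  qed
  ultimately have Yall: "Y = UNIV" using U_irr unfolding irreducible_rep_def by blast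
  define n :: complex where "n = of_nat (card H)"
  have n0: "n \<noteq> 0" unfolding n_def using finH subgroup.one_closed[OF assms(4)] by auto
  have avg: "sum (\<lambda>h. ?a h v) H \<in> fixed_vecs H ?a V \<and> sum (\<lambda>h. ?a h v) H \<one> = sc n u"
    if u: "u \<in> UHs" and v: "v \<in> V" "v \<one> = u" for u v
  proof -
    let ?S = "sum (\<lambda>h. ?a h v) H"
    have hV: "?a h v \<in> V" if "h \<in> H" for h using Vcl HG that v by auto
    have SV: "?S \<in> V" using Vsum[of \<one> H "\<lambda>h. ?a h v", OF one_closed finH hV] by blast
    have "?a h0 ?S = ?S" if h0: "h0 \<in> H" for h0
    proof -
      have h0c: "h0 \<in> carrier G" using h0 HG by auto
      have "?a h0 ?S = sum (\<lambda>h. ?a h0 (?a h v)) H" using Vsum[of h0 H "\<lambda>h. ?a h v", OF h0c finH hV] by blast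
      also have "\<dots> = sum (\<lambda>h. ?a (h0 \<otimes> h) v) H" using Vmult h0c HG v by (intro sum.cong) auto
      also have "\<dots> = sum (\<lambda>h. ?a h v) ((\<lambda>h. h0 \<otimes> h) ` H)"
      proof -
        have "inj_on (\<lambda>h. h0 \<otimes> h) H" using h0c HG by (auto simp: inj_on_def subset_iff)
        then show ?thesis by (simp add: sum.reindex)
      qed
      also have "(\<lambda>h. h0 \<otimes> h) ` H = H"
      proof
        show "(\<lambda>h. h0 \<otimes> h) ` H \<subseteq> H" using h0 subgroup.m_closed[OF assms(4)] by auto
      next
        show "H \<subseteq> (\<lambda>h. h0 \<otimes> h) ` H"
        proof
          fix h assume h: "h \<in> H"
          have "inv h0 \<otimes> h \<in> H" using subgroup.m_closed[OF assms(4) subgroup.m_inv_closed[OF assms(4) h0] h] .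
          moreover have "h = h0 \<otimes> (inv h0 \<otimes> h)" using h h0c HG by auto
          ultimately show "h \<in> (\<lambda>h. h0 \<otimes> h) ` H" by blast
        qed
      qed
      finally show ?thesis .
    qed
    then have Sfix: "?S \<in> fixed_vecs H ?a V" using SV unfolding fixed_vecs_def by auto
    have "?S \<one> = sum (\<lambda>h. ?a h v \<one>) H" by (rule sum_fun_apply)
    also have "\<dots> = sum (\<lambda>h. u) H" using act_e HK v u UH_iff by (intro sum.cong) auto
    also have "\<dots> = sc n u" unfolding n_def by (rule Modules.module.sum_constant_scale[OF modU])
    finally show ?thesis using Sfix by blast
  qed
  have P2a: "fixed_vecs H ?a V \<noteq> {0}"
  proof
    assume F0: "fixed_vecs H ?a V = {0}"
    obtain v where v: "v \<in> V" "v \<one> = u0" using Yall unfolding Y_def by (metis UNIV_I image_iff)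
    from avg[OF u0(1) v] F0 have "sc n u0 = 0" by (auto simp: zero_fun_def)
    then show False using vector_space.scale_eq_0_iff[OF vsU] n0 u0 by simp
  qed
  have P2b: "pt_stab K ?a (fixed_vecs H ?a V) \<subseteq> pt_stab K rho UHs"
  proof
    fix k assume "k \<in> pt_stab K ?a (fixed_vecs H ?a V)"
    then have k: "k \<in> K" "\<And>w. w \<in> fixed_vecs H ?a V \<Longrightarrow> ?a k w = w" unfolding pt_stab_def by auto
    have "rho k u = u" if u: "u \<in> UHs" for u
    proof -
      obtain v where v: "v \<in> V" "v \<one> = u" using Yall unfolding Y_def by (metis UNIV_I image_iff)
      define S where "S = sum (\<lambda>h. ?a h v) H"
      have S: "S \<in> fixed_vecs H ?a V" "S \<one> = sc n u" using avg[OF u v] unfolding S_def by auto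
      have "?a k S \<one> = S \<one>" using k(2)[OF S(1)] by simp
      then have "sc n (rho k u) = sc n u" using act_e[OF k(1)] S rho_sc[OF k(1)] by simp
      then show ?thesis using vector_space.scale_cancel_left[OF vsU] n0 by simp
    qed
    then show "k \<in> pt_stab K rho UHs" using k unfolding pt_stab_def by auto
  qed
  have P3: "pt_stab K rho UHs = H \<longrightarrow>
           pt_stab (carrier G) ?a (fixed_vecs H ?a (ind_space R)) = H
         \<and> pt_stab K ?a (fixed_vecs H ?a V) = H"
  proof
    assume eqH: "pt_stab K rho UHs = H"
    have "H \<subseteq> pt_stab (carrier G) ?a (fixed_vecs H ?a (ind_space R))"
      using HG unfolding pt_stab_def fixed_vecs_def by auto
    moreover have "H \<subseteq> pt_stab K ?a (fixed_vecs H ?a V)"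
      using HK unfolding pt_stab_def fixed_vecs_def by auto
    ultimately show "pt_stab (carrier G) ?a (fixed_vecs H ?a (ind_space R)) = H
         \<and> pt_stab K ?a (fixed_vecs H ?a V) = H" using P1 P2b eqH by blast
  qed
  show ?thesis using P1 P2a P2b P3 unfolding UHs_def by blast
qed

end

theorem lemma3p8:
  fixes G :: "('g, 'b) monoid_scheme"
    and K H R :: "'g set"
    and sc :: "complex \<Rightarrow> 'u::ab_group_add \<Rightarrow> 'u"
    and rho :: "'g \<Rightarrow> 'u \<Rightarrow> 'u"
    and V :: "('g \<Rightarrow> 'u) set"
  assumes "group G" and "finite (carrier G)"
    and "subgroup K G" and "subgroup H G" and "H \<subseteq> K"
    and U_irr: "irreducible_rep (G\<lparr>carrier := K\<rparr>) sc UNIV rho"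
    and UH: "fixed_vecs H rho UNIV \<noteq> {0}"
    and R: "left_transversal G K R"
    and V_sub: "is_subrep G (ind_scale sc) (ind_space R) (ind_action G K R rho) V"
    and V_irr: "irreducible_rep G (ind_scale sc) V (ind_action G K R rho)"
  shows "(pt_stab (carrier G) (ind_action G K R rho)
            (fixed_vecs H (ind_action G K R rho) (ind_space R))
           \<subseteq> pt_stab K rho (fixed_vecs H rho UNIV))
    \<and> (fixed_vecs H (ind_action G K R rho) V \<noteq> {0}
    \<and> pt_stab K (ind_action G K R rho) (fixed_vecs H (ind_action G K R rho) V)
           \<subseteq> pt_stab K rho (fixed_vecs H rho UNIV))
    \<and> (pt_stab K rho (fixed_vecs H rho UNIV) = H \<longrightarrow>
           pt_stab (carrier G) (ind_action G K R rho)
             (fixed_vecs H (ind_action G K R rho) (ind_space R)) = H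
         \<and> pt_stab K (ind_action G K R rho) (fixed_vecs H (ind_action G K R rho) V) = H)"
proof -
  interpret indsetup G K R sc rho
    using assms(1,3) R U_irr unfolding irreducible_rep_def
    by (intro indsetup.intro indsetup_axioms.intro) auto
  show ?thesis by (rule main[OF assms])
qed

end
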